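(* Let $G$ be a $4K_1$-free graph that is minimally non-perfectly divisible. Then $G$ does not contain a clique cutset.
   Context: All graphs are finite and simple. For $S\subseteq V(G)$, $G[S]$ is the subgraph induced by $S$. $\omega(G)$ is the number of vertices in a largest clique of $G$ and $\chi(G)$ the chromatic number. A graph $G$ is perfect if $\chi(H)=\omega(H)$ for every induced subgraph $H$ of $G$. A partition $(A,B)$ of $V(G)$ is good if $G[A]$ is perfect and $\omega(G[B])<\omega(G)$. A graph $G$ is perfectly divisible if every induced subgraph $H$ of $G$ with at least one edge admits a good partition (of $V(H)$). A graph is minimally non-perfectly divisible if it is not perfectly divisible but each of its proper induced subgraphs is perfectly divisible. A set $C\subseteq V(G)$ is a clique cutset if $C$ induces a clique in $G$ and $G-C$ is disconnected. $4K_1$ is the edgeless graph on four vertices; $G$ is $4K_1$-free if it contains no stable set of size four. *)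

theory Defs
  imports Main
begin

text \<open>Induced subgraphs G[S] (S \<subseteq> V) are
represented by the pair (S, E): only adjacencies between vertices of S matter.\<close>

definition graph :: "'a set \<Rightarrow> ('a \<Rightarrow> 'a \<Rightarrow> bool) \<Rightarrow> bool" where
  "graph V E \<longleftrightarrow> finite V \<and> (\<forall>x y. E x y \<longrightarrow> E y x) \<and> (\<forall>x. \<not> E x x)"

definition clique :: "('a \<Rightarrow> 'a \<Rightarrow> bool) \<Rightarrow> 'a set \<Rightarrow> bool" where
  "clique E K \<longleftrightarrow> (\<forall>x\<in>K. \<forall>y\<in>K. x \<noteq> y \<longrightarrow> E x y)"

definition stable :: "('a \<Rightarrow> 'a \<Rightarrow> bool) \<Rightarrow> 'a set \<Rightarrow> bool" where
  "stable E S \<longleftrightarrow> (\<forall>x\<in>S. \<forall>y\<in>S. \<not> E x y)"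

definition omega :: "'a set \<Rightarrow> ('a \<Rightarrow> 'a \<Rightarrow> bool) \<Rightarrow> nat" where
  "omega V E = Max {card K | K. K \<subseteq> V \<and> clique E K}"

definition proper_colouring :: "'a set \<Rightarrow> ('a \<Rightarrow> 'a \<Rightarrow> bool) \<Rightarrow> ('a \<Rightarrow> nat) \<Rightarrow> nat \<Rightarrow> bool" where
  "proper_colouring V E f k \<longleftrightarrow>
     (\<forall>x\<in>V. f x < k) \<and> (\<forall>x\<in>V. \<forall>y\<in>V. E x y \<longrightarrow> f x \<noteq> f y)"

definition chi :: "'a set \<Rightarrow> ('a \<Rightarrow> 'a \<Rightarrow> bool) \<Rightarrow> nat" where
  "chi V E = (LEAST k. \<exists>f. proper_colouring V E f k)"

definition perfect :: "'a set \<Rightarrow> ('a \<Rightarrow> 'a \<Rightarrow> bool) \<Rightarrow> bool" where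
  "perfect V E \<longleftrightarrow> (\<forall>S\<subseteq>V. chi S E = omega S E)"

definition good_partition :: "'a set \<Rightarrow> ('a \<Rightarrow> 'a \<Rightarrow> bool) \<Rightarrow> 'a set \<Rightarrow> 'a set \<Rightarrow> bool" where
  "good_partition V E A B \<longleftrightarrow>
     A \<union> B = V \<and> A \<inter> B = {} \<and> perfect A E \<and> omega B E < omega V E"

definition has_edge :: "'a set \<Rightarrow> ('a \<Rightarrow> 'a \<Rightarrow> bool) \<Rightarrow> bool" where
  "has_edge V E \<longleftrightarrow> (\<exists>x\<in>V. \<exists>y\<in>V. E x y)"

definition perfectly_divisible :: "'a set \<Rightarrow> ('a \<Rightarrow> 'a \<Rightarrow> bool) \<Rightarrow> bool" where
  "perfectly_divisible V E \<longleftrightarrow>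
     (\<forall>S\<subseteq>V. has_edge S E \<longrightarrow> (\<exists>A B. good_partition S E A B))"

definition minimally_non_perfectly_divisible :: "'a set \<Rightarrow> ('a \<Rightarrow> 'a \<Rightarrow> bool) \<Rightarrow> bool" where
  "minimally_non_perfectly_divisible V E \<longleftrightarrow>
     \<not> perfectly_divisible V E \<and> (\<forall>S. S \<subset> V \<longrightarrow> perfectly_divisible S E)"

definition four_K1_free :: "'a set \<Rightarrow> ('a \<Rightarrow> 'a \<Rightarrow> bool) \<Rightarrow> bool" where
  "four_K1_free V E \<longleftrightarrow> \<not> (\<exists>S\<subseteq>V. card S = 4 \<and> stable E S)"

text \<open>G[V] is connected: any two vertices joined by a path inside V.
(The empty graph counts as connected, so "disconnected" means at least two components.)\<close>
definition connected_graph :: "'a set \<Rightarrow> ('a \<Rightarrow> 'a \<Rightarrow> bool) \<Rightarrow> bool" where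
  "connected_graph V E \<longleftrightarrow>
     (\<forall>x\<in>V. \<forall>y\<in>V. (\<lambda>u v. u \<in> V \<and> v \<in> V \<and> E u v)\<^sup>*\<^sup>* x y)"

definition clique_cutset :: "'a set \<Rightarrow> ('a \<Rightarrow> 'a \<Rightarrow> bool) \<Rightarrow> 'a set \<Rightarrow> bool" where
  "clique_cutset V E C \<longleftrightarrow> C \<subseteq> V \<and> clique E C \<and> \<not> connected_graph (V - C) E"

end

theory Submission
  imports Defs
begin

lemma omega_fin: "finite S \<Longrightarrow> finite {card K | K. K \<subseteq> S \<and> clique E K}"
proof -
  assume "finite S"
  have "{card K | K. K \<subseteq> S \<and> clique E K} \<subseteq> card ` Pow S" by auto
  thus ?thesis using \<open>finite S\<close> by (meson finite_Pow_iff finite_imageI finite_subset)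
qed

lemma omega_ge: "finite S \<Longrightarrow> K \<subseteq> S \<Longrightarrow> clique E K \<Longrightarrow> card K \<le> omega S E"
proof -
  assume a: "finite S" "K \<subseteq> S" "clique E K"
  have "card K \<in> {card K | K. K \<subseteq> S \<and> clique E K}" using a by blast
  thus ?thesis unfolding omega_def using Max_ge[OF omega_fin[OF a(1)]] by blast
qed

lemma omega_obtain:
  assumes "finite S" obtains K where "K \<subseteq> S" "clique E K" "card K = omega S E"
proof -
  have "omega S E \<in> {card K | K. K \<subseteq> S \<and> clique E K}"
    unfolding omega_def
  proof (rule Max_in[OF omega_fin[OF assms]])
    have "{} \<subseteq> S \<and> clique E {}" by (simp add: clique_def)
    hence "card {} \<in> {card K | K. K \<subseteq> S \<and> clique E K}"
      by (intro CollectI exI[of _ "{}"]) simp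
    thus "{card K | K. K \<subseteq> S \<and> clique E K} \<noteq> {}" by blast
  qed
  then obtain K where K: "omega S E = card K" "K \<subseteq> S" "clique E K"
    unfolding mem_Collect_eq by blast
  show ?thesis by (rule that[OF K(2,3) K(1)[symmetric]])
qed

lemma omega_mono: "finite T \<Longrightarrow> S \<subseteq> T \<Longrightarrow> omega S E \<le> omega T E"
proof -
  assume a: "finite T" "S \<subseteq> T"
  obtain K where "K \<subseteq> S" "clique E K" "card K = omega S E"
    using omega_obtain[OF finite_subset[OF a(2,1)]] by blast
  thus ?thesis using omega_ge[OF a(1), of K E] a(2) by simp
qed

lemma colour_ge:
  assumes "finite S" "proper_colouring S E f k"
  shows "omega S E \<le> k"
proof -
  obtain K where K: "K \<subseteq> S" "clique E K" "card K = omega S E" using omega_obtain[OF assms(1)] by blast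
  have inj: "inj_on f K" using K assms(2) unfolding inj_on_def clique_def proper_colouring_def by blast
  have "f ` K \<subseteq> {..<k}" using K assms(2) unfolding proper_colouring_def by auto
  hence "card (f ` K) \<le> k" by (metis card_lessThan card_mono finite_lessThan)
  thus ?thesis using K card_image[OF inj] by simp
qed

lemma perfectI:
  assumes "finite A" "\<And>S. S \<subseteq> A \<Longrightarrow> \<exists>f. proper_colouring S E f (omega S E)"
  shows "perfect A E"
  unfolding perfect_def chi_def
proof (intro allI impI)
  fix S assume S: "S \<subseteq> A"
  have fS: "finite S" using S assms(1) finite_subset by blast
  obtain f where f: "proper_colouring S E f (omega S E)" using assms(2)[OF S] by blast
  have le: "(LEAST k. \<exists>f. proper_colouring S E f k) \<le> omega S E"
    using f by (intro Least_le) blast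
  obtain g where "proper_colouring S E g (LEAST k. \<exists>f. proper_colouring S E f k)"
    using LeastI_ex[of "\<lambda>k. \<exists>f. proper_colouring S E f k"] f by blast
  hence "omega S E \<le> (LEAST k. \<exists>f. proper_colouring S E f k)" using colour_ge fS by blast
  thus "(LEAST k. \<exists>f. proper_colouring S E f k) = omega S E" using le by simp
qed

lemma perfectD:
  assumes irr: "\<And>x. \<not> E x x" and "finite A" "perfect A E" "S \<subseteq> A"
  shows "\<exists>f. proper_colouring S E f (omega S E)"
proof -
  have fS: "finite S" using assms finite_subset by blast
  obtain f n where fn: "f ` S = {i::nat. i < n}" "inj_on f S" using finite_imp_inj_to_nat_seg[OF fS] by blast
  have "proper_colouring S E f n" unfolding proper_colouring_def
    using fn irr by (auto simp: inj_on_def)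
  hence "\<exists>g. proper_colouring S E g (chi S E)"
    unfolding chi_def by (intro LeastI_ex[of "\<lambda>k. \<exists>f. proper_colouring S E f k"]) blast
  thus ?thesis using assms(3,4) unfolding perfect_def by simp
qed


lemma glue:
  assumes sym: "\<And>x y. E x y \<Longrightarrow> E y x" and irr: "\<And>x. \<not> E x x"
    and fA: "finite A" and fK: "finite K" and disj: "A \<inter> K = {}"
    and pA: "perfect A E" and cK: "clique E K" and DA: "D \<subseteq> A" and cD: "clique E D"
    and DK: "\<And>u k. u \<in> D \<Longrightarrow> k \<in> K \<Longrightarrow> E u k"
    and nDK: "\<And>u k. u \<in> A \<Longrightarrow> u \<notin> D \<Longrightarrow> k \<in> K \<Longrightarrow> \<not> E u k"
  shows "perfect (A \<union> K) E"
proof (rule perfectI)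
  show "finite (A \<union> K)" using fA fK by simp
  fix S assume S: "S \<subseteq> A \<union> K"
  define S' where "S' = S \<inter> A"
  define SK where "SK = S \<inter> K"
  define D' where "D' = S' \<inter> D"
  define w where "w = omega S E"
  have finS: "finite S" using S fA fK by (meson finite_UnI finite_subset)
  obtain f where f: "proper_colouring S' E f (omega S' E)"
    using perfectD[OF irr fA pA] S'_def by blast
  have w1: "omega S' E \<le> w" unfolding w_def using omega_mono[OF finS] S'_def by blast
  have cl: "clique E (SK \<union> D')" unfolding clique_def
  proof (intro ballI impI)
    fix x y assume xy: "x \<in> SK \<union> D'" "y \<in> SK \<union> D'" "x \<noteq> y"
    show "E x y"
    proof (cases "x \<in> SK")
      case True
      then show ?thesis
      proof (cases "y \<in> SK")
        case True
        then show ?thesis using \<open>x \<in> SK\<close> xy cK unfolding SK_def clique_def by blast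
      next
        case False
        then show ?thesis using \<open>x \<in> SK\<close> xy DK sym unfolding SK_def D'_def by blast
      qed
    next
      case False
      then show ?thesis
      proof (cases "y \<in> SK")
        case True
        then show ?thesis using \<open>x \<notin> SK\<close> xy DK sym unfolding SK_def D'_def by blast
      next
        case False
        then show ?thesis using \<open>x \<notin> SK\<close> xy cD unfolding SK_def D'_def clique_def by blast
      qed
    qed
  qed
  have "card (SK \<union> D') \<le> w" unfolding w_def
    by (rule omega_ge[OF finS _ cl]) (auto simp: SK_def D'_def S'_def)
  moreover have "card (SK \<union> D') = card SK + card D'"
    by (rule card_Un_disjoint) (use finS disj in \<open>auto simp: SK_def D'_def S'_def\<close>)
  ultimately have c1: "card SK + card D' \<le> w" by simp
  define F where "F = {..<w} - f ` D'"
  have fD: "f ` D' \<subseteq> {..<w}" using f w1 unfolding proper_colouring_def D'_def by fastforce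
  have "card F = w - card (f ` D')" unfolding F_def
    using card_Diff_subset[OF _ fD] finite_subset[OF fD] by simp
  moreover have "card (f ` D') \<le> card D'" by (rule card_image_le) (use finS in \<open>simp add: D'_def S'_def\<close>)
  ultimately have "card SK \<le> card F" using c1 by linarith
  then obtain g where g: "g ` SK \<subseteq> F" "inj_on g SK"
    using card_le_inj[of SK F] finS unfolding F_def SK_def by auto
  define h where "h u = (if u \<in> K then g u else f u)" for u
  have "proper_colouring S E h w" unfolding proper_colouring_def
  proof (intro conjI ballI impI)
    fix x assume x: "x \<in> S"
    show "h x < w"
    proof (cases "x \<in> K")
      case True
      then show ?thesis using g x unfolding h_def F_def SK_def by auto
    next
      case False
      hence "x \<in> S'" using x S unfolding S'_def by blast
      hence "f x < omega S' E" using f unfolding proper_colouring_def by blast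
      then show ?thesis using w1 False unfolding h_def by simp
    qed
  next
    fix x y assume x: "x \<in> S" and y: "y \<in> S" and e: "E x y"
    have ne: "x \<noteq> y" using e irr by blast
    show "h x \<noteq> h y"
    proof (cases "x \<in> K")
      case xK: True
      show ?thesis
      proof (cases "y \<in> K")
        case True
        then show ?thesis using xK x y ne g(2) unfolding h_def SK_def inj_on_def by auto
      next
        case False
        hence "y \<in> A" using y S by blast
        hence "y \<in> D" using nDK xK e sym by blast
        hence "h y \<in> f ` D'" using y \<open>y \<in> A\<close> False unfolding h_def D'_def S'_def by auto
        moreover have "h x \<in> F" using g xK x unfolding h_def SK_def by auto
        ultimately show ?thesis unfolding F_def by auto
      qed
    next
      case xK: False
      show ?thesis
      proof (cases "y \<in> K")
        case True
        have "x \<in> A" using x S xK by blast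
        hence "x \<in> D" using nDK True e by blast
        hence "h x \<in> f ` D'" using x \<open>x \<in> A\<close> xK unfolding h_def D'_def S'_def by auto
        moreover have "h y \<in> F" using g True y unfolding h_def SK_def by auto
        ultimately show ?thesis unfolding F_def by auto
      next
        case False
        then show ?thesis using xK x y S e f unfolding h_def proper_colouring_def S'_def by auto
      qed
    qed
  qed
  thus "\<exists>f. proper_colouring S E f (omega S E)" unfolding w_def by blast
qed

lemma perfect_empty: "perfect {} E"
  by (rule perfectI) (auto simp: proper_colouring_def)

lemma perfect_stable:
  assumes sym: "\<And>x y. E x y \<Longrightarrow> E y x" and irr: "\<And>x. \<not> E x x"
    and "finite A" "stable E A" shows "perfect A E"
  using assms(3,4)
proof (induction A rule: finite_induct)
  case empty
  then show ?case using perfect_empty by blast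
next
  case (insert x F)
  have sF: "stable E F" using insert.prems unfolding stable_def by blast
  have pF: "perfect F E" using insert.IH sF by blast
  have nE: "\<And>u k. u \<in> F \<Longrightarrow> u \<notin> {} \<Longrightarrow> k \<in> {x} \<Longrightarrow> \<not> E u k"
    using insert.prems unfolding stable_def by blast
  have "perfect (F \<union> {x}) E"
    apply (rule glue[where A=F and K="{x}" and D="{}"])
    apply (erule sym) apply (rule irr)
    using irr insert.hyps pF nE by (auto simp: clique_def)
  thus ?case by simp
qed

lemma vertex_good:
  assumes g: "graph V E" and v: "v \<in> V" and p: "perfect {u\<in>V. \<not> E v u} E"
  shows "good_partition V E {u\<in>V. \<not> E v u} {u\<in>V. E v u}"
proof -
  have fV: "finite V" using g graph_def by blast
  obtain K where K: "K \<subseteq> {u\<in>V. E v u}" "clique E K" "card K = omega {u\<in>V. E v u} E"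
    using omega_obtain[of "{u\<in>V. E v u}" E] fV by auto
  have vK: "v \<notin> K" using K g unfolding graph_def by blast
  have "clique E (insert v K)" using K g unfolding clique_def graph_def by blast
  hence "card (insert v K) \<le> omega V E" using omega_ge[OF fV] K v by blast
  moreover have "card (insert v K) = card K + 1" using vK K fV finite_subset by fastforce
  ultimately show ?thesis unfolding good_partition_def using p K by auto
qed


lemma no_good:
  assumes "minimally_non_perfectly_divisible V E"
  shows "\<not> (\<exists>A B. good_partition V E A B)"
proof
  assume gp: "\<exists>A B. good_partition V E A B"
  obtain S where S: "S \<subseteq> V" "has_edge S E" "\<not> (\<exists>A B. good_partition S E A B)"
    using assms unfolding minimally_non_perfectly_divisible_def perfectly_divisible_def by blast
  show False
  proof (cases "S = V")
    case True
    then show ?thesis using S gp by blast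
  next
    case False
    hence "perfectly_divisible S E" using S assms
      unfolding minimally_non_perfectly_divisible_def by blast
    then show ?thesis using S unfolding perfectly_divisible_def by blast
  qed
qed

lemma main_split:
  assumes g: "graph V E" and f4: "four_K1_free V E"
    and m: "minimally_non_perfectly_divisible V E"
    and CV: "C \<subseteq> V" and cC: "clique E C"
    and XY: "X \<union> Y = V - C" "X \<inter> Y = {}" "X \<noteq> {}" "Y \<noteq> {}"
    and anti: "\<And>x y. x \<in> X \<Longrightarrow> y \<in> Y \<Longrightarrow> \<not> E x y"
    and cX: "clique E X"
  shows False
proof -
  have sym: "\<And>x y. E x y \<Longrightarrow> E y x" and irr: "\<And>x. \<not> E x x" and fV: "finite V"
    using g unfolding graph_def by blast+
  have anti': "\<And>x y. x \<in> X \<Longrightarrow> y \<in> Y \<Longrightarrow> \<not> E y x" using anti sym by blast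
  have ng: "\<not> (\<exists>A B. good_partition V E A B)" using no_good[OF m] .
  have XV: "X \<subseteq> V" "Y \<subseteq> V" using XY(1) by blast+
  have fX: "finite X" using finite_subset[OF XV(1) fV] .
  have fY: "finite Y" using finite_subset[OF XV(2) fV] .
  show False
  proof (cases "\<exists>c\<in>C. \<exists>x\<in>X. \<not> E c x")
    case True
    then obtain c x where c: "c \<in> C" and x: "x \<in> X" and cx: "\<not> E c x" by blast
    define X1 where "X1 = {u\<in>X. \<not> E c u}"
    define Y1 where "Y1 = {u\<in>Y. \<not> E c u}"
    have cY1: "clique E Y1" unfolding clique_def
    proof (intro ballI impI; rule ccontr)
      fix y1 y2 assume y: "y1 \<in> Y1" "y2 \<in> Y1" "y1 \<noteq> y2" "\<not> E y1 y2"
      have d: "c \<notin> X" "c \<notin> Y" "x \<notin> Y" "y1 \<notin> X" "y2 \<notin> X" "y1 \<in> Y" "y2 \<in> Y"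
        using c x XY y unfolding Y1_def by blast+
      have ne: "c \<noteq> x" "c \<noteq> y1" "c \<noteq> y2" "x \<noteq> y1" "x \<noteq> y2" "y1 \<noteq> y2"
        using d x y(3) by blast+
      have "card {c, x, y1, y2} = 4" using ne by simp
      moreover have "stable E {c, x, y1, y2}" unfolding stable_def
        using y cx anti anti' irr x sym[of x c] sym[of y1 y2] sym[of y1 c] sym[of y2 c] sym[of y2 y1] unfolding Y1_def by auto
      moreover have "{c, x, y1, y2} \<subseteq> V" using c x y XY CV unfolding Y1_def by blast
      ultimately show False using f4 unfolding four_K1_free_def by blast
    qed
    have cX1: "clique E X1" using cX unfolding clique_def X1_def by blast
    have NV: "{u\<in>V. \<not> E c u} = ({c} \<union> X1) \<union> Y1"
    proof -
      have cCu: "E c u" if "u \<in> C" "u \<noteq> c" for u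
        using cC c that unfolding clique_def by (metis)
      show ?thesis
      proof
        show "{u \<in> V. \<not> E c u} \<subseteq> {c} \<union> X1 \<union> Y1"
        proof
          fix u assume u: "u \<in> {u \<in> V. \<not> E c u}"
          show "u \<in> {c} \<union> X1 \<union> Y1"
          proof (cases "u \<in> C")
            case True
            then show ?thesis using cCu u by blast
          next
            case False
            then show ?thesis using u XY(1) unfolding X1_def Y1_def by blast
          qed
        qed
        show "{c} \<union> X1 \<union> Y1 \<subseteq> {u \<in> V. \<not> E c u}"
          using irr[of c] c CV XV unfolding X1_def Y1_def by blast
      qed
    qed
    have p1: "perfect {c} E" by (rule perfect_stable[where E=E, OF sym irr]) (auto simp: stable_def irr)
    have p2: "perfect ({c} \<union> X1) E"
      apply (rule glue[where A="{c}" and K=X1 and D="{}"])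
      apply (erule sym) apply (rule irr)
      using irr p1 cX1 fX c XY unfolding X1_def by (auto simp: clique_def)
    have p3: "perfect (({c} \<union> X1) \<union> Y1) E"
      apply (rule glue[where A="{c} \<union> X1" and K=Y1 and D="{}"])
      apply (erule sym) apply (rule irr)
      using irr p2 cY1 fX fY c XY anti unfolding X1_def Y1_def by (auto simp: clique_def)
    have "good_partition V E {u\<in>V. \<not> E c u} {u\<in>V. E c u}"
      by (rule vertex_good[OF g]) (use c CV NV p3 in auto)
    thus False using ng by blast
  next
    case False
    hence CX: "\<And>c x. c \<in> C \<Longrightarrow> x \<in> X \<Longrightarrow> E c x" by blast
    define V2 where "V2 = C \<union> Y"
    have V2V: "V2 \<subset> V" using XY CV unfolding V2_def by blast
    have fV2: "finite V2" using V2V fV finite_subset by blast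
    obtain A2 B2 where AB: "A2 \<union> B2 = V2" "A2 \<inter> B2 = {}" "perfect A2 E" "omega B2 E < omega V2 E"
    proof (cases "has_edge V2 E")
      case True
      have "perfectly_divisible V2 E" using m V2V unfolding minimally_non_perfectly_divisible_def by blast
      then show ?thesis using that True unfolding perfectly_divisible_def good_partition_def by blast
    next
      case False
      hence "stable E V2" unfolding has_edge_def stable_def by blast
      hence pV2: "perfect V2 E" using perfect_stable[where E=E, OF sym irr fV2] by blast
      obtain y where y: "y \<in> V2" using XY unfolding V2_def by blast
      have "card {y} \<le> omega V2 E" by (rule omega_ge[OF fV2]) (use y in \<open>auto simp: clique_def\<close>)
      moreover have "omega {} E = 0" unfolding omega_def by (simp add: clique_def)
      ultimately have "omega {} E < omega V2 E" by simp
      then show ?thesis using that[of V2 "{}"] pV2 by simp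
    qed
    have fA2: "finite A2" using AB fV2 by (metis finite_Un)
    have pA: "perfect (A2 \<union> X) E"
      apply (rule glue[where A=A2 and K=X and D="A2 \<inter> C"])
      apply (erule sym) apply (rule irr)
      using irr fA2 fX AB cX cC CX XY anti' V2_def by (auto simp: clique_def)
    have "omega V2 E \<le> omega V E" using omega_mono[OF fV] V2V by blast
    hence "good_partition V E (A2 \<union> X) B2" unfolding good_partition_def
      using AB pA XY CV V2_def by auto
    thus False using ng by blast
  qed
qed


theorem theorem3:
  fixes V :: "'a set" and E :: "'a \<Rightarrow> 'a \<Rightarrow> bool"
  assumes "graph V E"
    and "four_K1_free V E"
    and "minimally_non_perfectly_divisible V E"
  shows "\<not> (\<exists>C. clique_cutset V E C)"
proof
  assume "\<exists>C. clique_cutset V E C"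
  then obtain C where CV: "C \<subseteq> V" and cC: "clique E C" and nc: "\<not> connected_graph (V - C) E"
    unfolding clique_cutset_def by blast
  have sym: "\<And>x y. E x y \<Longrightarrow> E y x" and irr: "\<And>x. \<not> E x x"
    using assms(1) unfolding graph_def by blast+
  define R where "R = (\<lambda>u v. u \<in> V - C \<and> v \<in> V - C \<and> E u v)"
  obtain a b where a: "a \<in> V - C" and b: "b \<in> V - C" and nab: "\<not> R\<^sup>*\<^sup>* a b"
    using nc unfolding connected_graph_def R_def by blast
  define X where "X = {u \<in> V - C. R\<^sup>*\<^sup>* a u}"
  define Y where "Y = V - C - X"
  have anti: "\<not> E x y" if xX: "x \<in> X" and yY: "y \<in> Y" for x y
  proof
    assume e: "E x y"
    have xV: "x \<in> V - C" and ax: "R\<^sup>*\<^sup>* a x" using xX unfolding X_def by blast+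
    have yV: "y \<in> V - C" and nay: "\<not> R\<^sup>*\<^sup>* a y" using yY unfolding X_def Y_def by blast+
    have "R x y" unfolding R_def using xV yV e by blast
    hence "R\<^sup>*\<^sup>* a y" using ax by (rule rtranclp.rtrancl_into_rtrancl[rotated])
    thus False using nay by blast
  qed
  have anti': "\<And>x y. y \<in> Y \<Longrightarrow> x \<in> X \<Longrightarrow> \<not> E y x" using anti sym by blast
  have XY: "X \<union> Y = V - C" "X \<inter> Y = {}" "Y \<inter> X = {}" "Y \<union> X = V - C"
    unfolding X_def Y_def by blast+
  have Xne: "X \<noteq> {}" using a unfolding X_def by blast
  have Yne: "Y \<noteq> {}" using b nab unfolding X_def Y_def by blast
  have "clique E X \<or> clique E Y"
  proof (rule ccontr)
    assume "\<not> (clique E X \<or> clique E Y)"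
    then obtain x1 x2 y1 y2 where x: "x1 \<in> X" "x2 \<in> X" "x1 \<noteq> x2" "\<not> E x1 x2"
      and y: "y1 \<in> Y" "y2 \<in> Y" "y1 \<noteq> y2" "\<not> E y1 y2"
      unfolding clique_def by blast
    have d: "x1 \<notin> Y" "x2 \<notin> Y" using x XY by blast+
    have "x1 \<noteq> y1" "x1 \<noteq> y2" "x2 \<noteq> y1" "x2 \<noteq> y2" using d y by blast+
    hence "card {x1, x2, y1, y2} = 4" using x(3) y(3) by simp
    moreover have "stable E {x1, x2, y1, y2}" unfolding stable_def
      using x y anti anti' irr sym[of x1 x2] sym[of y1 y2] sym[of x2 x1] sym[of y2 y1] by auto
    moreover have "{x1, x2, y1, y2} \<subseteq> V" using x y XY by blast
    ultimately show False using assms(2) unfolding four_K1_free_def by blast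
  qed
  thus False
  proof
    assume "clique E X"
    show False by (rule main_split[OF assms CV cC XY(1,2) Xne Yne anti \<open>clique E X\<close>])
  next
    assume "clique E Y"
    show False by (rule main_split[OF assms CV cC XY(4,3) Yne Xne anti' \<open>clique E Y\<close>])
  qed
qed

end
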